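(* Let $n\geq 2$ and let $m\geq 2$ be an integer. Let $f\in L^{m/(m-1)}(\mathbb{R}^n)$ be a continuous nonnegative function with $f = f^{*_{\mathbf{e}}}$ for some $\mathbf{e}\in\mathbb{S}^{n-1}$, and assume that $$f(x) = h(x)\,(f*\cdots*f)(x)\quad\text{for all } x\in\mathbb{R}^n,$$ where the convolution product has $m$ factors and $h:\mathbb{R}^n\to(0,+\infty)$ is a continuous positive function. Then the set $\{x\in\mathbb{R}^n : f(x)>0\}$ is connected.
   Context: Symmetric-decreasing rearrangement: for a finite-measure set $A\subset\mathbb{R}^k$, $A^*$ is the centered open ball with the same measure; for measurable $u$ vanishing at infinity, $u^*(x)=\int_0^\infty\chi_{\{|u|>t\}^*}(x)\,dt$. Steiner symmetrization: with $x=(x_1,x')\in\mathbb{R}\times\mathbb{R}^{n-1}$, $u^{*_1}(x_1,x') := (u(x_1,\cdot))^*(x')$ (rearrangement in $\mathbb{R}^{n-1}$ for fixed $x_1$); for $\mathbf{e}\in\mathbb{S}^{n-1}$ pick $\mathsf{R}\in\mathrm{O}(n)$ with $\mathsf{R}\mathbf{e}=(1,0,\dots,0)$, $(\mathsf{R}u)(x)=u(\mathsf{R}^{-1}x)$, $u^{*_{\mathbf{e}}}:=\mathsf{R}^{-1}((\mathsf{R}u)^{*_1})$. *)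

theory Defs
  imports "HOL-Analysis.Analysis"
begin

text \<open>We model \<open>\<real>\<^sup>n\<close> as the product type \<open>real \<times> 'b\<close>, where \<open>'b\<close> is a Euclidean space
  playing the role of \<open>\<real>\<^sup>n\<^sup>-\<^sup>1\<close>; thus \<open>n = 1 + DIM('b) \<ge> 2\<close> automatically.\<close>

definition sym_ball :: "'b::euclidean_space set \<Rightarrow> 'b set" where
  "sym_ball A =
     (if emeasure lebesgue A = \<infinity> then UNIV
      else ball 0 (SOME r. 0 \<le> r \<and> emeasure lebesgue (ball (0::'b) r) = emeasure lebesgue A))"

text \<open>Symmetric-decreasing rearrangement (layer-cake), valued in \<open>[0,\<infinity>]\<close>.\<close>
definition sym_rearr :: "('b::euclidean_space \<Rightarrow> real) \<Rightarrow> 'b \<Rightarrow> ennreal" where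
  "sym_rearr u x =
     (\<integral>\<^sup>+ t\<in>{0<..}. indicator (sym_ball {y. \<bar>u y\<bar> > t}) x \<partial>lborel)"

definition steiner1 :: "(real \<times> 'b::euclidean_space \<Rightarrow> real) \<Rightarrow> real \<times> 'b \<Rightarrow> ennreal" where
  "steiner1 u x = sym_rearr (\<lambda>y. u (fst x, y)) (snd x)"

definition steiner_dir ::
  "real \<times> 'b::euclidean_space \<Rightarrow> (real \<times> 'b \<Rightarrow> real) \<Rightarrow> real \<times> 'b \<Rightarrow> ennreal" where
  "steiner_dir e u x =
     (let R = (SOME R :: real \<times> 'b \<Rightarrow> real \<times> 'b. orthogonal_transformation R \<and> R e = (1, 0))
      in steiner1 (u \<circ> inv R) (R x))"

definition conv :: "('a::euclidean_space \<Rightarrow> ennreal) \<Rightarrow> ('a \<Rightarrow> ennreal) \<Rightarrow> 'a \<Rightarrow> ennreal" where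
  "conv f g x = (\<integral>\<^sup>+ y. f y * g (x - y) \<partial>lborel)"

text \<open>\<open>conv_pow k f\<close> is the convolution product \<open>f * \<dots> * f\<close> with \<open>k\<close> factors (\<open>k \<ge> 1\<close>).\<close>
fun conv_pow :: "nat \<Rightarrow> ('a::euclidean_space \<Rightarrow> ennreal) \<Rightarrow> 'a \<Rightarrow> ennreal" where
  "conv_pow 0 f = f"
| "conv_pow (Suc 0) f = f"
| "conv_pow (Suc (Suc k)) f = conv f (conv_pow (Suc k) f)"

definition in_Lp :: "real \<Rightarrow> ('a::euclidean_space \<Rightarrow> real) \<Rightarrow> bool" where
  "in_Lp p f \<longleftrightarrow> f \<in> borel_measurable lebesgue \<and>
     (\<integral>\<^sup>+ x. ennreal (\<bar>f x\<bar> powr p) \<partial>lebesgue) < \<infinity>"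

end

theory Submission
  imports Defs
begin

lemma iter_add:
  fixes T :: "real set" and d :: real
  assumes h2: "\<And>x y. x \<in> T \<Longrightarrow> y \<in> T \<Longrightarrow> x + d * y \<in> T"
  shows "x \<in> T \<Longrightarrow> y \<in> T \<Longrightarrow> x + real j * (d * y) \<in> T"
proof (induction j arbitrary: x)
  case 0 then show ?case by simp
next
  case (Suc j)
  have "x + d * y \<in> T" using h2 Suc.prems by blast
  from Suc.IH[OF this Suc.prems(2)] show ?case by (simp add: algebra_simps)
qed

lemma both_case:
  fixes T :: "real set" and d :: real
  assumes op: "open T" and d: "d > 0"
    and h2: "\<And>x y. x \<in> T \<Longrightarrow> y \<in> T \<Longrightarrow> x + d * y \<in> T"
    and t1: "t1 \<in> T" "t1 < 0" and t2: "t2 \<in> T" "t2 > 0"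
  shows "z \<in> T"
proof -
  obtain \<epsilon> where e: "\<epsilon> > 0" "ball t2 \<epsilon> \<subseteq> T" using op t2 open_contains_ball by blast
  define w where "w = (z - t2) / d"
  obtain n :: nat where n: "real n > max (\<bar>t1\<bar> / \<epsilon>) (\<bar>w\<bar> / t2)" using reals_Archimedean2 by blast
  have nn: "\<bar>t1\<bar> / \<epsilon> < real n" "\<bar>w\<bar> / t2 < real n" using n by auto
  have "\<bar>t1\<bar> < real n * \<epsilon>" using nn(1) e(1) by (simp add: pos_divide_less_eq)
  then have n1: "real n * \<epsilon> > - t1" by linarith
  have "\<bar>w\<bar> < real n * t2" using nn(2) t2(2) by (simp add: pos_divide_less_eq)
  then have n2: "real n * t2 \<ge> w" by linarith
  have "0 \<le> \<bar>t1\<bar> / \<epsilon>" using e by simp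
  then have npos: "real n > 0" using nn(1) by linarith
  define a where "a = (real n * t2 - w) / (- t1)"
  have a0: "a \<ge> 0" unfolding a_def using n2 t1(2) by (intro divide_nonneg_pos) auto
  define k where "k = nat \<lfloor>a\<rfloor>"
  have k: "real k \<le> a" "a < real k + 1" using a0 unfolding k_def by (auto intro!: of_nat_floor)
  define u where "u = t2 - (- t1) * (a - real k) / real n"
  have "(- t1) * (a - real k) < (- t1) * 1"
    using k t1 by (intro mult_strict_left_mono) auto
  also have "\<dots> < real n * \<epsilon>" using n1 by simp
  finally have "(- t1) * (a - real k) / real n < \<epsilon>"
    by (subst pos_divide_less_eq[OF npos]) (simp add: mult.commute)
  moreover have "(- t1) * (a - real k) / real n \<ge> 0" using k t1(2) npos by (intro divide_nonneg_pos mult_nonneg_nonneg) auto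
  ultimately have "u \<in> ball t2 \<epsilon>" unfolding u_def by (auto simp: dist_real_def)
  then have u: "u \<in> T" using e by auto
  have ta: "t1 * a = - (real n * t2 - w)" unfolding a_def using t1 by simp
  have "real n * u = real n * t2 - (- t1) * (a - real k)"
    unfolding u_def using npos
    by (metis (no_types, lifting) nonzero_mult_div_cancel_left of_nat_0_less_iff right_diff_distrib less_irrefl times_divide_eq_right)
  then have eq: "real n * u + real k * t1 = w" using ta by (simp add: algebra_simps)
  have "t2 + real n * (d * u) \<in> T" using iter_add[OF h2 t2(1) u] .
  from iter_add[OF h2 this t1(1), of k]
  have "t2 + d * (real n * u + real k * t1) \<in> T" by (simp add: algebra_simps)
  then show ?thesis using eq d unfolding w_def by simp
qed

lemma pos_case:
  fixes T :: "real set" and d m :: real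
  assumes op: "open T" and d: "d > 0" and m: "m > 1"
    and h2: "\<And>x y. x \<in> T \<Longrightarrow> y \<in> T \<Longrightarrow> x + d * y \<in> T"
    and h3: "\<And>t. t \<in> T \<Longrightarrow> \<exists>s\<in>T. m * s \<le> t"
    and pos: "\<And>t. t \<in> T \<Longrightarrow> t > 0"
    and t: "t \<in> T" and z: "t \<le> z"
  shows "z \<in> T"
proof -
  have small: "\<exists>s\<in>T. s \<le> t / m ^ k" for k
  proof (induction k)
    case 0 then show ?case using t by auto
  next
    case (Suc k)
    then obtain s where s: "s \<in> T" "s \<le> t / m ^ k" by auto
    then obtain s' where s': "s' \<in> T" "m * s' \<le> s" using h3 by blast
    have "s' \<le> s / m" using s' m by (simp add: field_simps)
    also have "\<dots> \<le> t / m ^ k / m" using divide_right_mono[OF s(2), of m] m by (simp add: field_simps)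
    finally show ?case using s' by (auto simp: field_simps)
  qed
  obtain \<epsilon> where e: "\<epsilon> > 0" "ball t \<epsilon> \<subseteq> T" using op t open_contains_ball by blast
  obtain k where k: "t / (\<epsilon> / d) < m ^ k" using real_arch_pow[OF m] by blast
  have "t / m ^ k < \<epsilon> / d" using k e d m
    by (metis divide_less_eq mult.commute zero_less_divide_iff zero_less_power less_trans zero_less_one)
  then obtain s where s: "s \<in> T" "s < \<epsilon> / d" using small[of k] by force
  have sp: "s > 0" using pos s by auto
  have ds: "d * s < \<epsilon>" "d * s > 0" using s d sp by (auto simp: field_simps)
  define j where "j = nat \<lfloor>(z - t) / (d * s)\<rfloor>"
  have fl: "real j \<le> (z - t) / (d * s)" "(z - t) / (d * s) < real j + 1"
    using z ds unfolding j_def by (auto intro!: of_nat_floor)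
  have j1: "real j * (d * s) \<le> z - t" using fl(1) ds by (simp add: field_simps)
  have j2: "z - t < real j * (d * s) + d * s" using fl(2) ds by (simp add: field_simps)
  have "z - real j * (d * s) \<in> ball t \<epsilon>" using j1 j2 ds by (auto simp: dist_real_def)
  then have "z - real j * (d * s) \<in> T" using e by auto
  from iter_add[OF h2 this s(1), of j] show ?thesis by simp
qed

lemma T_interval:
  fixes T :: "real set" and d m :: real
  assumes op: "open T" and d: "d > 0" and m: "m > 1"
    and h2: "\<And>x y. x \<in> T \<Longrightarrow> y \<in> T \<Longrightarrow> x + d * y \<in> T"
    and h3: "\<And>t. t \<in> T \<Longrightarrow> \<exists>s\<in>T. m * s \<le> t"
    and h4: "\<And>t. t \<in> T \<Longrightarrow> \<exists>s\<in>T. m * s \<ge> t"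
  shows "connected T"
proof -
  have "is_interval T"
  proof (cases "(\<exists>t1\<in>T. t1 < 0) \<and> (\<exists>t2\<in>T. t2 > 0)")
    case True
    then obtain t1 t2 where "t1 \<in> T" "t1 < 0" "t2 \<in> T" "t2 > 0" by blast
    then have "T = UNIV" using both_case[OF op d h2, of t1 t2] by blast
    then show ?thesis by simp
  next
    case False
    then consider "\<forall>t\<in>T. t \<ge> 0" | "\<forall>t\<in>T. t \<le> 0" by (meson linorder_not_le)
    then show ?thesis
    proof cases
      case 1
      have "t > 0" if tT: "t \<in> T" for t
      proof (rule ccontr)
        assume "\<not> t > 0"
        then have t0: "t = 0" using 1 tT by force
        obtain \<epsilon> where e: "\<epsilon> > 0" "ball t \<epsilon> \<subseteq> T" using openE[OF op tT] by blast
        have "- \<epsilon>/2 \<in> T" using e t0 by (auto simp: dist_real_def)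
        moreover have "- \<epsilon>/2 < 0" using e by simp
        ultimately show False using 1 by fastforce
      qed
      note pc = pos_case[OF op d m h2 h3 this]
      show ?thesis unfolding is_interval_1
      proof (intro ballI allI impI)
        fix a b x assume "a \<in> T" "b \<in> T" "a \<le> x \<and> x \<le> b"
        then show "x \<in> T" using pc[of a x] by auto
      qed
    next
      case 2
      let ?S = "uminus ` T"
      have opS: "open ?S" using op by (simp add: open_negations)
      have h2S: "x + d * y \<in> ?S" if "x \<in> ?S" "y \<in> ?S" for x y
      proof -
        have "-x \<in> T" "-y \<in> T" using that by force+
        then have "-x + d * (-y) \<in> T" by (rule h2)
        then have "- (-x + d * (-y)) \<in> ?S" by blast
        then show ?thesis by (simp add: add.commute)
      qed
      have h3S: "\<exists>s\<in>?S. m * s \<le> t" if "t \<in> ?S" for t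
      proof -
        have "-t \<in> T" using that by force
        then obtain s where "s \<in> T" "m * s \<ge> -t" using h4 by blast
        then show ?thesis by (intro bexI[of _ "-s"]) auto
      qed
      have "t > 0" if tT: "t \<in> ?S" for t
      proof (rule ccontr)
        assume "\<not> t > 0"
        then have t0: "t = 0" using 2 tT by force
        obtain \<epsilon> where e: "\<epsilon> > 0" "ball t \<epsilon> \<subseteq> ?S" using openE[OF opS tT] by blast
        have "-(\<epsilon>/2) \<in> ?S" using e t0 by (auto simp: dist_real_def)
        then have "\<epsilon>/2 \<in> T" by force
        then have "\<epsilon>/2 \<le> 0" using 2 by blast
        then show False using e by simp
      qed
      note pc = pos_case[OF opS d m h2S h3S this]
      show ?thesis unfolding is_interval_1
      proof (intro ballI allI impI)
        fix a b x assume "a \<in> T" "b \<in> T" "a \<le> x \<and> x \<le> b"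
        then have "-x \<in> ?S" using pc[of "-b" "-x"] by auto
        then show "x \<in> T" by force
      qed
    qed
  qed
  then show ?thesis using is_interval_connected_1 by blast
qed

lemma exists_orth:
  fixes e b :: "'a::euclidean_space"
  assumes "norm e = norm b"
  shows "\<exists>R. orthogonal_transformation R \<and> R e = b"
proof (cases "e = b")
  case True then show ?thesis by (intro exI[of _ "\<lambda>x. x"]) simp
next
  case False
  define v where "v = e - b"
  have v0: "v \<bullet> v \<noteq> 0" using False unfolding v_def by simp
  define R where "R x = x - (2 * (x \<bullet> v) / (v \<bullet> v)) *\<^sub>R v" for x
  have lin: "linear R" unfolding R_def
    by (intro linearI) (auto simp: inner_add_left algebra_simps add_divide_distrib)
  have ip: "R x \<bullet> R y = x \<bullet> y" for x y
    unfolding R_def using v0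
    by (simp add: inner_diff_left inner_diff_right inner_commute field_simps power2_eq_square)
  have ee: "e \<bullet> e = b \<bullet> b" using assms by (simp add: dot_square_norm)
  have "v \<bullet> v = 2 * (e \<bullet> v)" unfolding v_def using ee
    by (simp add: inner_diff_left inner_diff_right inner_commute)
  then have "R e = e - v" unfolding R_def using v0 by simp
  then have "R e = b" unfolding v_def by simp
  then show ?thesis using lin ip unfolding orthogonal_transformation_def by blast
qed

lemma SR_mono:
  fixes u :: "'b::euclidean_space \<Rightarrow> real"
  assumes "norm y' \<le> norm y"
  shows "sym_rearr u y \<le> sym_rearr u y'"
  unfolding sym_rearr_def
proof (rule nn_integral_mono)
  fix t
  have "y' \<in> sym_ball A" if "y \<in> sym_ball A" for A
    using that assms unfolding sym_ball_def by (auto split: if_splits)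
  then show "indicator (sym_ball {y. t < \<bar>u y\<bar>}) y * indicator {0<..} t
      \<le> (indicator (sym_ball {y. t < \<bar>u y\<bar>}) y' * indicator {0<..} t :: ennreal)"
    by (auto simp: indicator_def)
qed

lemma conv_pow_Suc: "conv_pow (Suc (Suc k)) F = conv F (conv_pow (Suc k) F)"
  by simp

lemma L2:
  fixes F :: "'a::euclidean_space \<Rightarrow> ennreal"
  shows "conv_pow (Suc k) F x \<noteq> 0 \<Longrightarrow>
    \<exists>ps. (\<forall>i<Suc k. F (ps i) \<noteq> 0) \<and> x = (\<Sum>i<Suc k. ps i)"
proof (induction k arbitrary: x)
  case 0
  then show ?case by (intro exI[of _ "\<lambda>_. x"]) simp
next
  case (Suc k)
  have "conv F (conv_pow (Suc k) F) x \<noteq> 0" using Suc.prems by simp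
  then have "\<exists>y. F y * conv_pow (Suc k) F (x - y) \<noteq> 0"
  proof (rule contrapos_np)
    assume "\<not> (\<exists>y. F y * conv_pow (Suc k) F (x - y) \<noteq> 0)"
    then have "(\<lambda>y. F y * conv_pow (Suc k) F (x - y)) = (\<lambda>_. 0)" by auto
    then show "conv F (conv_pow (Suc k) F) x = 0" unfolding conv_def by simp
  qed
  then obtain y where y: "F y * conv_pow (Suc k) F (x - y) \<noteq> 0" by blast
  then have Fy: "F y \<noteq> 0" and G: "conv_pow (Suc k) F (x - y) \<noteq> 0" by auto
  obtain ps where ps: "\<forall>i<Suc k. F (ps i) \<noteq> 0" "x - y = (\<Sum>i<Suc k. ps i)"
    using Suc.IH[OF G] by blast
  define qs where "qs = ps(Suc k := y)"
  have "(\<Sum>i<Suc (Suc k). qs i) = (\<Sum>i<Suc k. ps i) + y"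
    unfolding qs_def by (simp add: sum.lessThan_Suc)
  also have "\<dots> = x" using ps(2) by (metis diff_add_cancel)
  finally have "x = (\<Sum>i<Suc (Suc k). qs i)" by simp
  moreover have "\<forall>i<Suc (Suc k). F (qs i) \<noteq> 0" using ps(1) Fy unfolding qs_def
    by (auto simp: less_Suc_eq)
  ultimately show ?case by blast
qed

lemma cont_pos:
  fixes f :: "'a::metric_space \<Rightarrow> real"
  assumes fc: "continuous_on UNIV f" and p: "f p > 0"
  shows "\<exists>r>0. \<forall>y. dist y p < r \<longrightarrow> f p / 2 \<le> f y"
proof -
  obtain d where d: "d > 0" "\<forall>y. dist y p < d \<longrightarrow> dist (f y) (f p) < f p / 2"
    using fc p unfolding continuous_on_iff by (metis UNIV_I half_gt_zero)
  have "f p / 2 \<le> f y" if "dist y p < d" for y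
  proof -
    have "\<bar>f y - f p\<bar> < f p / 2" using d(2) that by (simp add: dist_real_def)
    then show ?thesis by linarith
  qed
  then show ?thesis using d(1) by blast
qed

lemma ball_meas_pos: "r > 0 \<Longrightarrow> emeasure lborel (ball (p::'a::euclidean_space) r) > 0"
  using content_ball_pos[of r p] emeasure_lborel_ball_finite[of p r]
  by (simp add: emeasure_eq_ennreal_measure)

lemma L1:
  fixes f :: "'a::euclidean_space \<Rightarrow> real"
  assumes fc: "continuous_on UNIV f"
  shows "(\<forall>i<Suc k. f (ps i) > 0) \<Longrightarrow> \<exists>r>0. \<exists>c>0. \<forall>x'. dist x' (\<Sum>i<Suc k. ps i) < r \<longrightarrow>
     c \<le> conv_pow (Suc k) (\<lambda>y. ennreal (f y)) x'"
proof (induction k)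
  case 0
  then have "f (ps 0) > 0" by simp
  from cont_pos[OF fc this] obtain r where r: "r > 0" "\<forall>y. dist y (ps 0) < r \<longrightarrow> f (ps 0) / 2 \<le> f y"
    by blast
  show ?case
    apply (rule exI[of _ r], simp add: r)
    apply (rule exI[of _ "ennreal (f (ps 0) / 2)"])
    using r \<open>f (ps 0) > 0\<close> by (auto intro: ennreal_leI)
next
  case (Suc k)
  define q where "q = (\<Sum>i<Suc k. ps i)"
  define p where "p = ps (Suc k)"
  have sq: "(\<Sum>i<Suc (Suc k). ps i) = q + p" unfolding q_def p_def by simp
  obtain r2 c2 where r2: "r2 > 0" "c2 > 0" "\<forall>x'. dist x' q < r2 \<longrightarrow> c2 \<le> conv_pow (Suc k) (\<lambda>y. ennreal (f y)) x'"
    using Suc.IH Suc.prems unfolding q_def by auto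
  have fp: "f p > 0" using Suc.prems unfolding p_def by simp
  from cont_pos[OF fc this] obtain r1 where r1: "r1 > 0" "\<forall>y. dist y p < r1 \<longrightarrow> f p / 2 \<le> f y"
    by blast
  define r where "r = min r1 r2 / 2"
  have r: "r > 0" "r \<le> r1" "2 * r \<le> r2" using r1 r2 unfolding r_def by auto
  define c0 where "c0 = ennreal (f p / 2) * c2"
  have c0: "c0 > 0" unfolding c0_def using fp r2 by (simp add: ennreal_zero_less_mult_iff)
  show ?case
  proof (intro exI[of _ r] exI[of _ "c0 * emeasure lborel (ball p r)"] conjI allI impI)
    show "r > 0" by (rule r)
    show "0 < c0 * emeasure lborel (ball p r)"
      using c0 ball_meas_pos[OF r(1), of p] by (simp add: ennreal_zero_less_mult_iff)
    fix x' assume x': "dist x' (\<Sum>i<Suc (Suc k). ps i) < r"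
    have "c0 * emeasure lborel (ball p r) = (\<integral>\<^sup>+ y. c0 * indicator (ball p r) y \<partial>lborel)"
      by (simp add: nn_integral_cmult_indicator)
    also have "\<dots> \<le> (\<integral>\<^sup>+ y. ennreal (f y) * conv_pow (Suc k) (\<lambda>y. ennreal (f y)) (x' - y) \<partial>lborel)"
    proof (rule nn_integral_mono)
      fix y
      show "c0 * indicator (ball p r) y \<le> ennreal (f y) * conv_pow (Suc k) (\<lambda>y. ennreal (f y)) (x' - y)"
      proof (cases "y \<in> ball p r")
        case True
        then have dy: "dist y p < r" by (simp add: dist_commute)
        then have "f p / 2 \<le> f y" using r1 r by auto
        then have A: "ennreal (f p / 2) \<le> ennreal (f y)" by (rule ennreal_leI)
        have "x' - y - q = (x' - (q + p)) + (p - y)" by (simp add: algebra_simps)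
        then have "norm (x' - y - q) \<le> norm (x' - (q + p)) + norm (p - y)"
          by (metis norm_triangle_ineq)
        moreover have "norm (x' - (q + p)) < r" using x' sq by (simp add: dist_norm)
        moreover have "norm (p - y) < r" using dy by (simp add: dist_norm norm_minus_commute)
        ultimately have "dist (x' - y) q < r2" using r by (simp add: dist_norm)
        then have B: "c2 \<le> conv_pow (Suc k) (\<lambda>y. ennreal (f y)) (x' - y)" using r2 by auto
        have "c0 \<le> ennreal (f y) * conv_pow (Suc k) (\<lambda>y. ennreal (f y)) (x' - y)"
          unfolding c0_def using A B by (intro mult_mono) auto
        then show ?thesis using True by simp
      qed simp
    qed
    also have "\<dots> = conv_pow (Suc (Suc k)) (\<lambda>y. ennreal (f y)) x'"
      by (simp add: conv_def)
    finally show "c0 * emeasure lborel (ball p r) \<le> conv_pow (Suc (Suc k)) (\<lambda>y. ennreal (f y)) x'" .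
  qed
qed

lemma avg_min:
  fixes a :: "nat \<Rightarrow> real"
  assumes "m > 0" "(\<Sum>i<m. a i) = t"
  shows "\<exists>i<m. real m * a i \<le> t"
proof (rule ccontr)
  assume "\<not> ?thesis"
  then have "\<And>i. i \<in> {..<m} \<Longrightarrow> t / real m < a i" using assms(1)
    by (auto simp: not_le pos_divide_less_eq mult.commute)
  then have "(\<Sum>i<m. t / real m) < (\<Sum>i<m. a i)" using assms(1)
    by (intro sum_strict_mono) auto
  then show False using assms by simp
qed

lemma avg_max:
  fixes a :: "nat \<Rightarrow> real"
  assumes "m > 0" "(\<Sum>i<m. a i) = t"
  shows "\<exists>i<m. real m * a i \<ge> t"
proof (rule ccontr)
  assume "\<not> ?thesis"
  then have "\<And>i. i \<in> {..<m} \<Longrightarrow> a i < t / real m" using assms(1)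
    by (auto simp: not_le pos_less_divide_eq mult.commute)
  then have "(\<Sum>i<m. a i) < (\<Sum>i<m. t / real m)" using assms(1)
    by (intro sum_strict_mono) auto
  then show False using assms by simp
qed


theorem lemma4p2:
  fixes f h :: "real \<times> 'b::euclidean_space \<Rightarrow> real"
    and m :: nat and e :: "real \<times> 'b"
  assumes "m \<ge> 2"
    and "in_Lp (real m / (real m - 1)) f"
    and "continuous_on UNIV f"
    and "\<And>x. f x \<ge> 0"
    and "norm e = 1"
    and "\<And>x. ennreal (f x) = steiner_dir e f x"
    and "continuous_on UNIV h"
    and "\<And>x. h x > 0"
    and "\<And>x. ennreal (f x) = ennreal (h x) * conv_pow m (\<lambda>y. ennreal (f y)) x"
  shows "connected {x. f x > 0}"
proof -
  note fc = assms(3) and f0 = assms(4) and eqn = assms(9)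
  obtain k where mk: "m = Suc k" and k1: "k \<ge> 1" using assms(1) by (metis Suc_le_D Suc_le_mono one_add_one plus_1_eq_Suc)
  define F where "F = (\<lambda>y. ennreal (f y))"
  have "norm e = norm (1::real, 0::'b)" using assms(5) by (simp add: norm_Pair)
  then have ex: "\<exists>R. orthogonal_transformation R \<and> R e = (1::real, 0::'b)" by (rule exists_orth)
  define R where "R = (SOME R :: real \<times> 'b \<Rightarrow> real \<times> 'b. orthogonal_transformation R \<and> R e = (1, 0))"
  have Rp: "orthogonal_transformation R" using someI_ex[OF ex] unfolding R_def by blast
  define Ri where "Ri = inv R"
  have oRi: "orthogonal_transformation Ri" unfolding Ri_def using Rp by (rule orthogonal_transformation_inv)
  have RRi: "R (Ri z) = z" for z unfolding Ri_def
    using orthogonal_transformation_surj[OF Rp] by (simp add: surj_f_inv_f)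
  have RiR: "Ri (R z) = z" for z unfolding Ri_def
    using orthogonal_transformation_inj[OF Rp] by (simp add: inv_f_f)
  have linR: "linear R" using Rp by (rule orthogonal_transformation_linear)
  have linRi: "linear Ri" using oRi by (rule orthogonal_transformation_linear)
  have cRi: "continuous_on UNIV Ri"
    using linRi by (intro linear_continuous_on) (simp add: linear_conv_bounded_linear)
  have sd: "steiner_dir e f x = steiner1 (f \<circ> Ri) (R x)" for x
    unfolding steiner_dir_def R_def Ri_def Let_def by simp
  define g where "g z = f (Ri z)" for z
  have gc: "continuous_on UNIV g" unfolding g_def
    using continuous_on_compose[OF cRi, of f] continuous_on_subset[OF fc subset_UNIV] by (simp add: o_def)
  have E: "ennreal (g (s, y)) = sym_rearr (\<lambda>w. f (Ri (s, w))) y" for s y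
    using assms(6)[of "Ri (s, y)"] by (simp add: sd g_def steiner1_def o_def RRi)
  have K: "g (s, y) \<le> g (s, y')" if "norm y' \<le> norm y" for s y y'
  proof -
    have "ennreal (g (s, y)) \<le> ennreal (g (s, y'))"
      unfolding E by (rule SR_mono[OF that])
    then show ?thesis using f0 unfolding g_def by (simp add: ennreal_le_iff)
  qed
  have pos_conv: "f x > 0 \<longleftrightarrow> conv_pow m F x \<noteq> 0" for x
  proof -
    have "ennreal (f x) = ennreal (h x) * conv_pow m F x" using eqn[of x] unfolding F_def .
    moreover have "ennreal (h x) \<noteq> 0" using assms(8)[of x] by simp
    ultimately show ?thesis by (metis ennreal_eq_0_iff mult_eq_0_iff not_le)
  qed
  define T where "T = {s. g (s, 0) > 0}"
  define Q where "Q = {z. g z > 0}"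
  have openT: "open T" unfolding T_def
  proof (rule open_Collect_less)
    show "continuous_on UNIV (\<lambda>x. 0::real)" by simp
    show "continuous_on UNIV (\<lambda>s. g (s, 0))"
      using continuous_on_compose[of UNIV "\<lambda>s. (s, 0::'b)" g] continuous_on_subset[OF gc subset_UNIV]
      by (simp add: o_def continuous_on_Pair continuous_on_id continuous_on_const)
  qed
  have h2: "x + real k * y \<in> T" if "x \<in> T" "y \<in> T" for x y
  proof -
    define p where "p = Ri (x, 0)"
    define q where "q = Ri (y, 0)"
    have fp: "f p > 0" "f q > 0" using that unfolding T_def g_def p_def q_def by auto
    define ps where "ps i = (if i = 0 then p else q)" for i :: nat
    have "\<forall>i<Suc k. f (ps i) > 0" using fp unfolding ps_def by auto
    from L1[OF fc this] obtain r c where rc: "r > 0" "c > 0"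
      "\<forall>x'. dist x' (\<Sum>i<Suc k. ps i) < r \<longrightarrow> c \<le> conv_pow (Suc k) F x'"
      unfolding F_def by blast
    have "c \<le> conv_pow m F (\<Sum>i<Suc k. ps i)" using rc(1) rc(3)[rule_format, of "\<Sum>i<Suc k. ps i"] mk by simp
    then have "conv_pow m F (\<Sum>i<Suc k. ps i) \<noteq> 0" using rc(2) by auto
    then have fs: "f (\<Sum>i<Suc k. ps i) > 0" using pos_conv by blast
    have "(\<Sum>i<Suc k. ps i) = p + (\<Sum>i<k. q)"
      unfolding sum.lessThan_Suc_shift by (simp add: ps_def)
    also have "\<dots> = p + real k *\<^sub>R q" using sum_constant_scaleR[of q "{..<k}"] by simp
    finally have S: "(\<Sum>i<Suc k. ps i) = p + real k *\<^sub>R q" .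
    have "R (p + real k *\<^sub>R q) = (x + real k * y, 0)"
      using linear_add[OF linR] linear_scale[OF linR] unfolding p_def q_def by (simp add: RRi)
    then have "g (x + real k * y, 0) = f (p + real k *\<^sub>R q)"
      unfolding g_def by (metis RiR)
    then show ?thesis using fs S unfolding T_def by simp
  qed
  have decomp: "\<exists>a. (\<forall>i<m. a i \<in> T) \<and> (\<Sum>i<m. a i) = t" if "t \<in> T" for t
  proof -
    define x where "x = Ri (t, 0)"
    have "f x > 0" using that unfolding T_def g_def x_def by auto
    then have "conv_pow (Suc k) F x \<noteq> 0" using pos_conv mk by simp
    from L2[OF this] obtain ps where ps: "\<forall>i<Suc k. F (ps i) \<noteq> 0" "x = (\<Sum>i<Suc k. ps i)" by blast
    define a where "a i = fst (R (ps i))" for i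
    have "a i \<in> T" if "i < m" for i
    proof -
      have "ennreal (f (ps i)) \<noteq> 0" using ps(1) that mk unfolding F_def by simp
      then have "f (ps i) > 0" using ennreal_eq_0_iff not_le by blast
      then have "g (R (ps i)) > 0" unfolding g_def by (simp add: RiR)
      moreover have "g (R (ps i)) \<le> g (a i, 0)" unfolding a_def
        using K[of 0 "snd (R (ps i))" "fst (R (ps i))"] by simp
      ultimately show ?thesis unfolding T_def by simp
    qed
    moreover have "(\<Sum>i<m. a i) = t"
    proof -
      have "R x = (t, 0)" unfolding x_def by (simp add: RRi)
      moreover have "R x = (\<Sum>i<m. R (ps i))" unfolding ps(2) mk by (rule linear_sum[OF linR])
      ultimately have "t = fst (\<Sum>i<m. R (ps i))" by simp
      then show ?thesis unfolding a_def by (simp add: fst_sum)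
    qed
    ultimately show ?thesis by blast
  qed
  have h3: "\<exists>s\<in>T. real m * s \<le> t" if tT: "t \<in> T" for t
  proof -
    obtain a where a: "\<forall>i<m. a i \<in> T" "(\<Sum>i<m. a i) = t" using decomp[OF tT] by blast
    from avg_min[OF _ a(2)] obtain i where "i < m" "real m * a i \<le> t" using mk by auto
    then show ?thesis using a(1) by blast
  qed
  have h4: "\<exists>s\<in>T. real m * s \<ge> t" if tT: "t \<in> T" for t
  proof -
    obtain a where a: "\<forall>i<m. a i \<in> T" "(\<Sum>i<m. a i) = t" using decomp[OF tT] by blast
    from avg_max[OF _ a(2)] obtain i where "i < m" "real m * a i \<ge> t" using mk by auto
    then show ?thesis using a(1) by blast
  qed
  have cT: "connected T"
    by (rule T_interval[OF openT _ _ h2 h3 h4]) (use k1 mk in auto)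
  define A where "A = (\<lambda>s. (s, 0::'b)) ` T"
  define B where "B = (\<lambda>z. closed_segment z (fst z, 0::'b)) ` Q"
  have cA: "connected A" unfolding A_def
    by (rule connected_continuous_image[OF _ cT])
       (simp add: continuous_on_Pair continuous_on_id continuous_on_const)
  have fstT: "fst z \<in> T" if "z \<in> Q" for z
  proof -
    have "g z \<le> g (fst z, 0)" using K[of 0 "snd z" "fst z"] by simp
    then show ?thesis using that unfolding Q_def T_def by simp
  qed
  have seg: "closed_segment z (fst z, 0) \<subseteq> Q" if "z \<in> Q" for z
  proof
    fix w assume "w \<in> closed_segment z (fst z, 0::'b)"
    then obtain u where u: "0 \<le> u" "u \<le> 1" "w = (1 - u) *\<^sub>R z + u *\<^sub>R (fst z, 0)"
      unfolding closed_segment_def by blast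
    have w: "w = (fst z, (1 - u) *\<^sub>R snd z)" using u(3)
      by (cases z) (simp add: algebra_simps)
    have "(1 - u) * norm (snd z) \<le> 1 * norm (snd z)" using u by (intro mult_right_mono) auto
    then have "norm ((1 - u) *\<^sub>R snd z) \<le> norm (snd z)" using u by simp
    then have "g z \<le> g w" using K[of "(1 - u) *\<^sub>R snd z" "snd z" "fst z"] w by (cases z) simp
    then show "w \<in> Q" using that unfolding Q_def by simp
  qed
  have QAB: "Q = A \<union> \<Union>B"
  proof
    show "Q \<subseteq> A \<union> \<Union>B" unfolding B_def by auto
    show "A \<union> \<Union>B \<subseteq> Q" unfolding A_def B_def using seg by (auto simp: T_def Q_def)
  qed
  have cQ: "connected Q" unfolding QAB
  proof (rule connected_Un_UN[OF cA])
    fix X assume "X \<in> B"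
    then obtain z where z: "z \<in> Q" "X = closed_segment z (fst z, 0)" unfolding B_def by blast
    show "connected X" using z by simp
    have "(fst z, 0) \<in> A" using fstT[OF z(1)] unfolding A_def by blast
    then show "A \<inter> X \<noteq> {}" using z by auto
  qed
  have "{x. f x > 0} = Ri ` Q"
  proof
    show "{x. f x > 0} \<subseteq> Ri ` Q"
    proof
      fix x assume "x \<in> {x. f x > 0}"
      then have "R x \<in> Q" unfolding Q_def g_def by (simp add: RiR)
      then show "x \<in> Ri ` Q" by (metis RiR image_eqI)
    qed
    show "Ri ` Q \<subseteq> {x. f x > 0}" unfolding Q_def g_def by auto
  qed
  then show ?thesis using connected_continuous_image[OF _ cQ] cRi
    by (metis continuous_on_subset subset_UNIV)
qed

end
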